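(* (1) Let $I=(\mathcal{M},[N],(u_i)_{i\in[N]})$ be a non-negative instance. Then $\frac23\le\lambda^I\le\infty$, and $\lambda^I=\infty$ if and only if $MmS_{u_i}^N(\mathcal{M})=0$ for all $i\in[N]$. (2) Let $I=(\mathcal{M},[N],(d_i)_{i\in[N]})$ be a non-positive instance. Then $0\le\lambda^I\le2$, and $\lambda^I=0$ if $MmS_{d_i}^N(\mathcal{M})=0$ for some $i\in[N]$.
   Context: An instance: finite item set $\mathcal{M}$, agents $[N]=\{1,\dots,N\}$, additive utilities $v_i$, either all item values $\ge0$ (non-negative instance, goods) or all $\le0$ (non-positive instance, chores). $\Pi_N(\mathcal{M})$ is the set of ordered $N$-partitions of $\mathcal{M}$ (parts may be empty); $MmS_{v}^N(\mathcal{M}):=\max_{(S_1,\ldots,S_N)\in\Pi_N(\mathcal{M})}\min_{j} v(S_j)$. For $\lambda\in\mathbb{R}$, an allocation $S\in\Pi_N(\mathcal{M})$ solves the $\lambda$-max-min problem for the instance iff $v_i(S_i)\ge\lambda\cdot MmS_{v_i}^N(\mathcal{M})$ for all $i$. The optimal MmS ratio $\lambda^I$ is: for a non-negative instance, the maximal $\lambda\in[0,\infty]$ for which the $\lambda$-max-min problem has a solution (with $\lambda^I=\infty$ meaning a solution exists for every real $\lambda$); for a non-positive instance, the minimal $\lambda\in[0,\infty)$ for which the $\lambda$-max-min problem has a solution. *)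

theory Defs
  imports Complex_Main "HOL-Library.Extended_Real"
begin

text \<open>An ordered N-partition of M is a map S :: nat => 'a set whose parts S 1, ..., S N
are pairwise disjoint with union M (parts may be empty); outside 1..N the map is
normalised to the empty set.\<close>

definition partitions :: "nat \<Rightarrow> 'a set \<Rightarrow> (nat \<Rightarrow> 'a set) set" where
  "partitions N M = {S.
     (\<forall>j\<in>{1..N}. \<forall>k\<in>{1..N}. j \<noteq> k \<longrightarrow> S j \<inter> S k = {}) \<and>
     (\<Union>j\<in>{1..N}. S j) = M \<and>
     (\<forall>j. j \<notin> {1..N} \<longrightarrow> S j = {})}"

definition MmS :: "('a \<Rightarrow> real) \<Rightarrow> nat \<Rightarrow> 'a set \<Rightarrow> real" where
  "MmS v N M = Max ((\<lambda>S. Min ((\<lambda>j. sum v (S j)) ` {1..N})) ` partitions N M)"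

definition solves_max_min ::
    "real \<Rightarrow> 'a set \<Rightarrow> nat \<Rightarrow> (nat \<Rightarrow> 'a \<Rightarrow> real) \<Rightarrow> (nat \<Rightarrow> 'a set) \<Rightarrow> bool" where
  "solves_max_min l M N u S \<longleftrightarrow>
     S \<in> partitions N M \<and> (\<forall>i\<in>{1..N}. sum (u i) (S i) \<ge> l * MmS (u i) N M)"

definition max_min_solvable :: "real \<Rightarrow> 'a set \<Rightarrow> nat \<Rightarrow> (nat \<Rightarrow> 'a \<Rightarrow> real) \<Rightarrow> bool" where
  "max_min_solvable l M N u \<longleftrightarrow> (\<exists>S. solves_max_min l M N u S)"

definition nonneg_instance :: "'a set \<Rightarrow> nat \<Rightarrow> (nat \<Rightarrow> 'a \<Rightarrow> real) \<Rightarrow> bool" where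
  "nonneg_instance M N u \<longleftrightarrow> (\<forall>i\<in>{1..N}. \<forall>x\<in>M. u i x \<ge> 0)"

definition nonpos_instance :: "'a set \<Rightarrow> nat \<Rightarrow> (nat \<Rightarrow> 'a \<Rightarrow> real) \<Rightarrow> bool" where
  "nonpos_instance M N u \<longleftrightarrow> (\<forall>i\<in>{1..N}. \<forall>x\<in>M. u i x \<le> 0)"

definition opt_ratio_nonneg :: "'a set \<Rightarrow> nat \<Rightarrow> (nat \<Rightarrow> 'a \<Rightarrow> real) \<Rightarrow> ereal" where
  "opt_ratio_nonneg M N u = (GREATEST l::ereal. 0 \<le> l \<and>
      (l = \<infinity> \<longrightarrow> (\<forall>r. max_min_solvable r M N u)) \<and>
      (l \<noteq> \<infinity> \<longrightarrow> max_min_solvable (real_of_ereal l) M N u))"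

definition opt_ratio_nonpos :: "'a set \<Rightarrow> nat \<Rightarrow> (nat \<Rightarrow> 'a \<Rightarrow> real) \<Rightarrow> real" where
  "opt_ratio_nonpos M N d = (LEAST l::real. 0 \<le> l \<and> max_min_solvable l M N d)"

end

theory Submission
  imports Defs "HOL-Library.FuncSet"
begin


lemma partitions_finite:
  assumes "finite M" shows "finite (partitions N M)"
proof -
  let ?g = "\<lambda>f j. if j \<in> {1..N} then f j else ({}::'a set)"
  have "partitions N M \<subseteq> ?g ` (PiE {1..N} (\<lambda>_. Pow M))"
  proof
    fix S assume S: "S \<in> partitions N M"
    have "S = ?g (restrict S {1..N})"
      using S unfolding partitions_def by (auto simp: fun_eq_iff)
    moreover have "restrict S {1..N} \<in> PiE {1..N} (\<lambda>_. Pow M)"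
      using S unfolding partitions_def by auto
    ultimately show "S \<in> ?g ` (PiE {1..N} (\<lambda>_. Pow M))" by blast
  qed
  moreover have "finite (PiE {1..N} (\<lambda>_. Pow M))"
    using assms by (intro finite_PiE) auto
  ultimately show ?thesis by (meson finite_imageI finite_subset)
qed

lemma partitions_ne:
  assumes "N \<ge> 1" shows "(\<lambda>j. if j = 1 then M else {}) \<in> partitions N M"
  using assms unfolding partitions_def by auto

lemma part_sub: "S \<in> partitions N M \<Longrightarrow> S j \<subseteq> M"
  unfolding partitions_def by (cases "j \<in> {1..N}") auto

lemma part_disj: "S \<in> partitions N M \<Longrightarrow> j \<in> {1..N} \<Longrightarrow> k \<in> {1..N} \<Longrightarrow> j \<noteq> k \<Longrightarrow> S j \<inter> S k = {}"
  unfolding partitions_def by auto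

lemma part_union: "S \<in> partitions N M \<Longrightarrow> (\<Union>j\<in>{1..N}. S j) = M"
  unfolding partitions_def by auto

lemma part_sum:
  assumes "finite M" "S \<in> partitions N M"
  shows "sum v M = (\<Sum>j\<in>{1..N}. sum v (S j))"
proof -
  have "sum v M = sum v (\<Union>j\<in>{1..N}. S j)" using part_union[OF assms(2)] by simp
  also have "\<dots> = (\<Sum>j\<in>{1..N}. sum v (S j))"
    apply (rule sum.UNION_disjoint)
    using assms part_sub[OF assms(2)] part_disj[OF assms(2)] by (auto intro: finite_subset)
  finally show ?thesis .
qed

lemma MmS_attained:
  assumes "finite M" "N \<ge> 1"
  shows "\<exists>S\<in>partitions N M. Min ((\<lambda>j. sum v (S j)) ` {1..N}) = MmS v N M"
proof -
  have "MmS v N M \<in> (\<lambda>S. Min ((\<lambda>j. sum v (S j)) ` {1..N})) ` partitions N M"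
    unfolding MmS_def
    apply (rule Max_in)
    using partitions_finite[OF assms(1)] partitions_ne[OF assms(2)] by auto
  then show ?thesis by force
qed

lemma MmS_ge:
  assumes "finite M" "S \<in> partitions N M"
  shows "Min ((\<lambda>j. sum v (S j)) ` {1..N}) \<le> MmS v N M"
  unfolding MmS_def
  apply (rule Max_ge)
  using partitions_finite[OF assms(1)] assms(2) by auto

lemma MmS_part:
  assumes "finite M" "N \<ge> 1"
  obtains S where "S \<in> partitions N M" "\<And>j. j \<in> {1..N} \<Longrightarrow> MmS v N M \<le> sum v (S j)"
proof -
  obtain S where S: "S \<in> partitions N M" "Min ((\<lambda>j. sum v (S j)) ` {1..N}) = MmS v N M"
    using MmS_attained[OF assms] by blast
  show ?thesis
    apply (rule that[OF S(1)])
    using S(2) by (metis Min_le finite_atLeastAtMost finite_imageI image_eqI)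
qed

lemma MmS_nonneg:
  assumes "finite M" "N \<ge> 1" "\<forall>x\<in>M. v x \<ge> 0"
  shows "MmS v N M \<ge> 0"
proof -
  obtain S where S: "S \<in> partitions N M" "Min ((\<lambda>j. sum v (S j)) ` {1..N}) = MmS v N M"
    using MmS_attained[OF assms(1,2)] by blast
  have "\<forall>j\<in>{1..N}. sum v (S j) \<ge> 0"
    using assms(3) part_sub[OF S(1)] by (meson subsetD sum_nonneg)
  then show ?thesis using S(2) assms(2)
    by (metis (no_types, lifting) Min_in atLeastAtMost_iff empty_iff finite_atLeastAtMost finite_imageI image_iff image_is_empty le_refl)
qed

lemma MmS_nonpos:
  assumes "finite M" "N \<ge> 1" "\<forall>x\<in>M. v x \<le> 0"
  shows "MmS v N M \<le> 0"
proof -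
  obtain S where S: "S \<in> partitions N M" "Min ((\<lambda>j. sum v (S j)) ` {1..N}) = MmS v N M"
    using MmS_attained[OF assms(1,2)] by blast
  have "sum v (S 1) \<le> 0"
    using assms(3) part_sub[OF S(1)] by (meson subsetD sum_nonpos)
  moreover have "Min ((\<lambda>j. sum v (S j)) ` {1..N}) \<le> sum v (S 1)"
    using assms(2) by (intro Min_le) auto
  ultimately show ?thesis using S(2) by simp
qed



definition kparts :: "('b \<Rightarrow> real) \<Rightarrow> real \<Rightarrow> nat \<Rightarrow> 'b set \<Rightarrow> bool" where
  "kparts v \<mu> k R \<longleftrightarrow> (\<exists>P. (\<forall>l<k. P l \<subseteq> R \<and> \<mu> \<le> sum v (P l)) \<and>
       (\<forall>l<k. \<forall>l'<k. l \<noteq> l' \<longrightarrow> P l \<inter> P l' = {}))"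

lemma kparts_exchange:
  assumes fin: "finite R" and k: "k \<ge> 1"
    and P: "\<forall>l<k. P l \<subseteq> R \<and> \<mu> \<le> sum v (P l)"
    and disj: "\<forall>l<k. \<forall>l'<k. l \<noteq> l' \<longrightarrow> P l \<inter> P l' = {}"
    and D: "D < k"
    and U: "U = (\<Union>l\<in>{l. l<k \<and> l \<noteq> D}. P l)"
    and inj: "inj_on \<rho> (B \<inter> U)" and rim: "\<rho> ` (B \<inter> U) \<subseteq> Aset - U"
    and Aset: "Aset \<subseteq> R - B"
    and val: "\<forall>a\<in>Aset. \<forall>b\<in>B. v b \<le> v a"
  shows "kparts v \<mu> (k-1) (R - B)"
proof -
  define idx where "idx l = (if l < D then l else Suc l)" for l
  define Q where "Q l = (P (idx l) - B) \<union> \<rho> ` (B \<inter> P (idx l))" for l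
  have idx: "l < k - 1 \<Longrightarrow> idx l < k \<and> idx l \<noteq> D" for l unfolding idx_def using D by auto
  have idxinj: "idx l = idx l' \<Longrightarrow> l = l'" for l l' unfolding idx_def by (auto split: if_splits)
  have PU: "l < k - 1 \<Longrightarrow> P (idx l) \<subseteq> U" for l using idx U by auto
  show ?thesis unfolding kparts_def
  proof (rule exI[of _ Q], intro conjI allI impI)
    fix l assume l: "l < k - 1"
    have i: "idx l < k" "idx l \<noteq> D" using idx[OF l] by auto
    show "Q l \<subseteq> R - B" unfolding Q_def using P i PU[OF l] rim Aset by blast
    have fP: "finite (P (idx l))" using P i fin finite_subset by blast
    have d1: "(P (idx l) - B) \<inter> \<rho> ` (B \<inter> P (idx l)) = {}" using rim PU[OF l] by blast
    have "sum v (Q l) = sum v (P (idx l) - B) + sum v (\<rho> ` (B \<inter> P (idx l)))"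
      unfolding Q_def using fP d1 by (intro sum.union_disjoint) auto
    also have "sum v (\<rho> ` (B \<inter> P (idx l))) = sum (v \<circ> \<rho>) (B \<inter> P (idx l))"
      using PU[OF l] by (intro sum.reindex inj_on_subset[OF inj]) auto
    also have "\<dots> \<ge> sum v (B \<inter> P (idx l))"
    proof (rule sum_mono)
      fix b assume b: "b \<in> B \<inter> P (idx l)"
      then have "\<rho> b \<in> Aset" using rim PU[OF l] by blast
      then show "v b \<le> (v \<circ> \<rho>) b" using val b by auto
    qed
    moreover have "sum v (P (idx l)) = sum v (P (idx l) - B) + sum v (B \<inter> P (idx l))"
      using fP by (metis Int_commute add.commute sum.Int_Diff)
    ultimately show "\<mu> \<le> sum v (Q l)" using P i by force
  next
    fix l l' assume l: "l < k - 1" and l': "l' < k - 1" and ne: "l \<noteq> l'"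
    have i: "idx l < k" "idx l' < k" "idx l \<noteq> idx l'" using idx l l' idxinj ne by blast+
    have a: "P (idx l) \<inter> P (idx l') = {}" using disj i by blast
    have b: "\<rho> ` (B \<inter> P (idx l)) \<inter> \<rho> ` (B \<inter> P (idx l')) = {}"
    proof -
      have "\<rho> ` (B \<inter> P (idx l)) \<inter> \<rho> ` (B \<inter> P (idx l')) = \<rho> ` ((B \<inter> P (idx l)) \<inter> (B \<inter> P (idx l')))"
        using inj PU[OF l] PU[OF l'] by (intro inj_on_image_Int[symmetric, of _ "B \<inter> U"]) auto
      then show ?thesis using a by auto
    qed
    show "Q l \<inter> Q l' = {}" unfolding Q_def using a b rim PU[OF l] PU[OF l'] by blast
  qed
qed

lemma kparts_remove:
  assumes fin: "finite R" and k: "k \<ge> 1" and kp: "kparts v \<mu> k R"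
    and B: "B \<subseteq> R" and Aset: "Aset \<subseteq> R - B"
    and val: "\<forall>a\<in>Aset. \<forall>b\<in>B. v b \<le> v a"
    and pig: "\<And>P. \<forall>l<k. P l \<subseteq> R \<Longrightarrow> \<forall>l<k. \<forall>l'<k. l \<noteq> l' \<longrightarrow> P l \<inter> P l' = {} \<Longrightarrow>
       \<exists>D<k. card B \<le> card ((Aset \<union> B) - (\<Union>l\<in>{l. l<k \<and> l \<noteq> D}. P l))"
  shows "kparts v \<mu> (k-1) (R - B)"
proof -
  obtain P where P: "\<forall>l<k. P l \<subseteq> R \<and> \<mu> \<le> sum v (P l)"
    and disj: "\<forall>l<k. \<forall>l'<k. l \<noteq> l' \<longrightarrow> P l \<inter> P l' = {}"
    using kp unfolding kparts_def by blast
  obtain D where D: "D < k" and c: "card B \<le> card ((Aset \<union> B) - (\<Union>l\<in>{l. l<k \<and> l \<noteq> D}. P l))"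
    using pig[of P] P disj by blast
  define U where "U = (\<Union>l\<in>{l. l<k \<and> l \<noteq> D}. P l)"
  have fB: "finite B" using B fin finite_subset by blast
  have fA: "finite Aset" using Aset fin finite_subset by blast
  have e1: "(Aset \<union> B) - U = (Aset - U) \<union> (B - U)" by blast
  have e2: "card ((Aset - U) \<union> (B - U)) = card (Aset - U) + card (B - U)"
    using Aset fA fB by (intro card_Un_disjoint) auto
  have e3: "card B = card (B \<inter> U) + card (B - U)"
    using fB by (metis card_Int_Diff)
  have c': "card B \<le> card ((Aset \<union> B) - U)" using c unfolding U_def .
  have "card (B \<inter> U) \<le> card (Aset - U)" using c' e1 e2 e3 by simp
  then obtain \<rho> where "\<rho> ` (B \<inter> U) \<subseteq> Aset - U" "inj_on \<rho> (B \<inter> U)"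
    using card_le_inj[of "B \<inter> U" "Aset - U"] fA fB by auto
  then show ?thesis
    using kparts_exchange[OF fin k P disj D U_def] Aset val by blast
qed



lemma pig2:
  assumes fC: "finite C" and cC: "card C = k + 1" and k: "k \<ge> 1"
    and disj: "\<forall>l<k. \<forall>l'<k. l \<noteq> l' \<longrightarrow> P l \<inter> P l' = {}"
  shows "\<exists>D<k. 2 \<le> card (C - (\<Union>l\<in>{l. l<k \<and> l \<noteq> D}. P l))"
proof (rule ccontr)
  assume "\<not> ?thesis"
  then have le: "\<forall>D<k. card (C - (\<Union>l\<in>{l. l<k \<and> l \<noteq> D}. P l)) \<le> 1" by auto
  define U where "U = (\<Union>l\<in>{..<k}. P l)"
  define f where "f = card (C - U)"
  have each: "card (C \<inter> P D) + f \<le> 1" if D: "D < k" for D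
  proof -
    have sub: "(C \<inter> P D) \<union> (C - U) \<subseteq> C - (\<Union>l\<in>{l. l<k \<and> l \<noteq> D}. P l)"
      using disj D unfolding U_def by blast
    have "card ((C \<inter> P D) \<union> (C - U)) = card (C \<inter> P D) + card (C - U)"
      using fC D unfolding U_def by (intro card_Un_disjoint) auto
    moreover have "card ((C \<inter> P D) \<union> (C - U)) \<le> card (C - (\<Union>l\<in>{l. l<k \<and> l \<noteq> D}. P l))"
      using sub fC by (intro card_mono) auto
    ultimately show ?thesis using le D unfolding f_def by fastforce
  qed
  have cu: "card (C \<inter> U) = (\<Sum>D<k. card (C \<inter> P D))"
  proof -
    have "C \<inter> U = (\<Union>D\<in>{..<k}. C \<inter> P D)" unfolding U_def by blast
    moreover have "card (\<Union>D\<in>{..<k}. C \<inter> P D) = (\<Sum>D<k. card (C \<inter> P D))"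
      using fC disj by (intro card_UN_disjoint) auto
    ultimately show ?thesis by simp
  qed
  have "card C = card (C \<inter> U) + f" unfolding f_def using fC by (metis card_Int_Diff)
  moreover have "(\<Sum>D<k. card (C \<inter> P D) + f) \<le> (\<Sum>D<k. 1)"
    using each by (intro sum_mono) auto
  then have "(\<Sum>D<k. card (C \<inter> P D)) + k * f \<le> k" by (simp add: sum.distrib)
  moreover have "f \<le> 1" using each[of 0] k by linarith
  ultimately show False using cC cu k
    by (cases f) (auto simp: algebra_simps)
qed

lemma kparts_remove1:
  assumes fin: "finite R" and k: "k \<ge> 1" and kp: "kparts v \<mu> k R" and g: "g \<in> R"
  shows "kparts v \<mu> (k-1) (R - {g})"
proof (rule kparts_remove[OF fin k kp, of _ "{}"])
  fix P assume P: "\<forall>l<k. P l \<subseteq> R" and disj: "\<forall>l<k. \<forall>l'<k. l \<noteq> l' \<longrightarrow> P l \<inter> P l' = {}"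
  show "\<exists>D<k. card {g} \<le> card (({} \<union> {g}) - (\<Union>l\<in>{l. l<k \<and> l \<noteq> D}. P l))"
  proof (cases "\<exists>l<k. g \<in> P l")
    case True
    then obtain D where D: "D < k" "g \<in> P D" by blast
    then have "g \<notin> (\<Union>l\<in>{l. l<k \<and> l \<noteq> D}. P l)" using disj by blast
    then have "{g} - (\<Union>l\<in>{l. l<k \<and> l \<noteq> D}. P l) = {g}" by blast
    then show ?thesis using D by (intro exI[of _ D]) auto
  next
    case False
    then have "{g} - (\<Union>l\<in>{l. l<k \<and> l \<noteq> 0}. P l) = {g}" by blast
    then show ?thesis using k by (intro exI[of _ 0]) auto
  qed
qed (use g in auto)

lemma kparts_remove2:
  assumes fin: "finite R" and k: "k \<ge> 1" and kp: "kparts v \<mu> k R"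
    and C: "C \<subseteq> R" "card C = k + 1" and B: "B \<subseteq> C" "card B = 2"
    and val: "\<forall>a\<in>C - B. \<forall>b\<in>B. v b \<le> v a"
  shows "kparts v \<mu> (k-1) (R - B)"
proof (rule kparts_remove[OF fin k kp, of _ "C - B"])
  fix P assume P: "\<forall>l<k. P l \<subseteq> R" and disj: "\<forall>l<k. \<forall>l'<k. l \<noteq> l' \<longrightarrow> P l \<inter> P l' = {}"
  have fC: "finite C" using C fin finite_subset by blast
  have "C - B \<union> B = C" using B by blast
  then show "\<exists>D<k. card B \<le> card ((C - B \<union> B) - (\<Union>l\<in>{l. l<k \<and> l \<noteq> D}. P l))"
    using pig2[OF fC C(2) k disj] B(2) by simp
qed (use B C val in auto)



definition alloc :: "(nat \<Rightarrow> 'b set) \<Rightarrow> nat set \<Rightarrow> 'b set \<Rightarrow> bool" where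
  "alloc f A R \<longleftrightarrow> (\<forall>i\<in>A. \<forall>j\<in>A. i \<noteq> j \<longrightarrow> f i \<inter> f j = {}) \<and> (\<Union>i\<in>A. f i) = R"

lemma alloc_single: "alloc (\<lambda>_. R) {i} R"
  unfolding alloc_def by auto

lemma alloc_upd:
  assumes "alloc f A' R'" "i \<notin> A'" "B \<inter> R' = {}"
  shows "alloc (f(i:=B)) (insert i A') (B \<union> R')"
proof -
  have sub: "j \<in> A' \<Longrightarrow> f j \<subseteq> R'" for j using assms(1) unfolding alloc_def by blast
  show ?thesis using assms sub unfolding alloc_def by (auto simp: fun_upd_def)
qed

lemma kparts_sum:
  assumes "finite R" "\<forall>x\<in>R. 0 \<le> v x" "kparts v \<mu> k R"
  shows "real k * \<mu> \<le> sum v R"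
proof -
  obtain P where P: "\<forall>l<k. P l \<subseteq> R \<and> \<mu> \<le> sum v (P l)"
    and disj: "\<forall>l<k. \<forall>l'<k. l \<noteq> l' \<longrightarrow> P l \<inter> P l' = {}"
    using assms(3) unfolding kparts_def by blast
  have "real k * \<mu> = (\<Sum>l<k. \<mu>)" by simp
  also have "\<dots> \<le> (\<Sum>l<k. sum v (P l))" using P by (intro sum_mono) auto
  also have "\<dots> = sum v (\<Union>l\<in>{..<k}. P l)"
    using P disj assms(1) by (intro sum.UNION_disjoint[symmetric]) (auto intro: finite_subset)
  also have "\<dots> \<le> sum v R"
    using P assms(1,2) by (intro sum_mono2) auto
  finally show ?thesis .
qed

lemma phase2:
  fixes v :: "nat \<Rightarrow> 'b \<Rightarrow> real" and \<mu> :: "nat \<Rightarrow> real"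
  assumes "r \<ge> 1" "finite A" "card A = r" "finite S" "finite T" "S \<inter> T = {}" "card S \<le> r"
    "\<forall>j\<in>A. \<forall>x\<in>S\<union>T. 0 \<le> v j x" "\<forall>j\<in>A. 0 \<le> \<mu> j"
    "\<forall>j\<in>A. real r * \<mu> j \<le> sum (v j) (S\<union>T)"
    "\<forall>j\<in>A. \<forall>s\<in>S. 3 * v j s < 2 * \<mu> j"
    "\<forall>j\<in>A. \<forall>t\<in>T. 3 * v j t < \<mu> j"
  shows "\<exists>f. alloc f A (S\<union>T) \<and> (\<forall>i\<in>A. 2 * \<mu> i \<le> 3 * sum (v i) (f i))"
  using assms
proof (induction r arbitrary: A S T rule: nat_induct_at_least)
  case base
  then obtain i where A: "A = {i}" by (metis One_nat_def card_1_singletonE)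
  have "2 * \<mu> i \<le> 3 * sum (v i) (S \<union> T)" using base A by auto
  then show ?case using A alloc_single by blast
next
  case (Suc n)
  note hyp = Suc.prems
  have Ane: "A \<noteq> {}" using hyp by auto
  define X where "X = (if S = {} then {} else {SOME s. s \<in> S})"
  have XS: "X \<subseteq> S" unfolding X_def by (auto intro: someI)
  have fX: "finite X" unfolding X_def by auto
  have cSX: "card (S - X) \<le> n"
  proof (cases "S = {}")
    case False
    then have "X = {SOME s. s \<in> S}" "(SOME s. s \<in> S) \<in> S" unfolding X_def by (auto intro: someI)
    then show ?thesis using hyp by (simp add: card_Diff_singleton)
  qed (simp add: X_def)
  define Cs where "Cs = {T'. T' \<subseteq> T \<and> (\<exists>i\<in>A. 2 * \<mu> i \<le> 3 * sum (v i) (X \<union> T'))}"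
  have TCs: "T \<in> Cs"
  proof -
    obtain j where j: "j \<in> A" using Ane by blast
    have split: "sum (v j) (S \<union> T) = sum (v j) (X \<union> T) + sum (v j) (S - X)"
    proof -
      have "S \<union> T = (X \<union> T) \<union> (S - X)" using XS by blast
      moreover have "(X \<union> T) \<inter> (S - X) = {}" using hyp XS by blast
      ultimately show ?thesis using hyp fX by (simp add: sum.union_disjoint)
    qed
    have "sum (v j) (S - X) \<le> real (card (S - X)) * (2 * \<mu> j / 3)"
      using hyp j by (intro sum_bounded_above) (auto simp: field_simps less_imp_le)
    also have "\<dots> \<le> real n * (2 * \<mu> j / 3)"
      using cSX hyp j by (intro mult_right_mono) auto
    finally have "3 * sum (v j) (S - X) \<le> 2 * (real n * \<mu> j)" by simp
    moreover have "real (Suc n) * \<mu> j = real n * \<mu> j + \<mu> j" by (simp add: algebra_simps)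
    ultimately have "2 * \<mu> j \<le> 3 * sum (v j) (X \<union> T)"
      using hyp j split by (smt (verit) mult_nonneg_nonneg of_nat_0_le_iff)
    then show ?thesis unfolding Cs_def using j by auto
  qed
  obtain T0 where T0: "T0 \<in> Cs" and T0min: "\<forall>T'\<in>Cs. card T0 \<le> card T'"
    using ex_has_least_nat[of "\<lambda>T'. T' \<in> Cs" T card] TCs by blast
  obtain i where i: "i \<in> A" "2 * \<mu> i \<le> 3 * sum (v i) (X \<union> T0)" "T0 \<subseteq> T"
    using T0 unfolding Cs_def by blast
  have fT0: "finite T0" using i hyp finite_subset by blast
  define B where "B = X \<union> T0"
  have others: "sum (v j) B \<le> \<mu> j" if j: "j \<in> A" for j
  proof (cases "T0 = {}")
    case True
    show ?thesis
    proof (cases "X = {}")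
      case True then show ?thesis using \<open>T0 = {}\<close> hyp j by (simp add: B_def)
    next
      case False
      then obtain s where "X = {s}" "s \<in> S" using XS unfolding X_def by (auto split: if_splits)
      moreover have "3 * v j s < 2 * \<mu> j" "0 \<le> \<mu> j" using hyp j \<open>s \<in> S\<close> by auto
      ultimately show ?thesis using \<open>T0 = {}\<close> by (auto simp: B_def)
    qed
  next
    case False
    then obtain t where t: "t \<in> T0" by blast
    have "T0 - {t} \<notin> Cs"
    proof
      assume "T0 - {t} \<in> Cs"
      then have "card T0 \<le> card (T0 - {t})" using T0min by blast
      then show False using t fT0 by (metis card_Diff1_less leD)
    qed
    then have "3 * sum (v j) (X \<union> (T0 - {t})) < 2 * \<mu> j" using i j unfolding Cs_def by force
    moreover have "sum (v j) B = sum (v j) (X \<union> (T0 - {t})) + v j t"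
    proof -
      have tX: "t \<notin> X" using t i XS hyp by blast
      have "B = insert t (X \<union> (T0 - {t}))" using t unfolding B_def by blast
      then show ?thesis using tX fX fT0 by (simp add: add.commute)
    qed
    moreover have "3 * v j t < \<mu> j" using hyp j t i by blast
    ultimately show ?thesis by linarith
  qed
  define A' where "A' = A - {i}"
  define S' where "S' = S - X"
  define T' where "T' = T - T0"
  have cA': "card A' = n" using hyp i unfolding A'_def by simp
  have ST': "S' \<union> T' = (S \<union> T) - B" unfolding S'_def T'_def B_def using hyp XS i by blast
  have BST: "B \<subseteq> S \<union> T" unfolding B_def using XS i by blast
  have fST: "finite (S \<union> T)" using hyp by simp
  have IHprem: "\<forall>j\<in>A'. real n * \<mu> j \<le> sum (v j) (S' \<union> T')"
  proof
    fix j assume j: "j \<in> A'"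
    then have jA: "j \<in> A" unfolding A'_def by simp
    have "sum (v j) (S' \<union> T') = sum (v j) (S \<union> T) - sum (v j) B"
      using ST' BST fST by (simp add: sum_diff)
    moreover have "real (Suc n) * \<mu> j = real n * \<mu> j + \<mu> j" by (simp add: algebra_simps)
    ultimately show "real n * \<mu> j \<le> sum (v j) (S' \<union> T')"
      using others[OF jA] hyp jA by smt
  qed
  obtain f where f: "alloc f A' (S' \<union> T')" "\<forall>i\<in>A'. 2 * \<mu> i \<le> 3 * sum (v i) (f i)"
    using Suc.IH[of A' S' T'] Suc.hyps hyp IHprem cA' cSX
    unfolding A'_def S'_def T'_def by (auto simp: Int_Diff)
  have al: "alloc (f(i:=B)) (insert i A') (B \<union> (S' \<union> T'))"
    using alloc_upd[OF f(1)] ST' unfolding A'_def by blast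
  moreover have "insert i A' = A" using i unfolding A'_def by blast
  moreover have "B \<union> (S' \<union> T') = S \<union> T" using ST' BST by blast
  ultimately have "alloc (f(i:=B)) A (S \<union> T)" by simp
  moreover have "\<forall>j\<in>A. 2 * \<mu> j \<le> 3 * sum (v j) ((f(i:=B)) j)"
    using f(2) i unfolding A'_def B_def by auto
  ultimately show ?case by blast
qed



lemma in_take_nth: "x \<in> set (take m xs) \<Longrightarrow> \<exists>p. p < m \<and> p < length xs \<and> x = xs ! p"
  by (auto simp: in_set_conv_nth)

lemma in_drop_nth: "x \<in> set (drop m xs) \<Longrightarrow> \<exists>q. m \<le> q \<and> q < length xs \<and> x = xs ! q"
  by (auto simp: in_set_conv_nth) (metis add.commute le_add2 less_diff_conv nth_drop)

lemma sls_mono: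
  assumes "finite R" "p \<le> q" "q < card R"
  shows "sorted_list_of_set R ! p \<le> sorted_list_of_set R ! q"
  using assms by (intro sorted_nth_mono) auto

lemma sls_in:
  assumes "finite R" "q < card R"
  shows "sorted_list_of_set R ! q \<in> R"
  using assms by (metis length_sorted_list_of_set nth_mem set_sorted_list_of_set)

lemma phase1:
  fixes w :: "nat \<Rightarrow> nat \<Rightarrow> real" and \<mu> :: "nat \<Rightarrow> real"
  assumes "k \<ge> 1" "finite A" "card A = k" "finite R"
    "\<forall>j\<in>A. \<forall>x\<in>R. 0 \<le> w j x" "\<forall>j\<in>A. \<forall>x\<in>R. \<forall>y\<in>R. x \<le> y \<longrightarrow> w j y \<le> w j x"
    "\<forall>j\<in>A. 0 \<le> \<mu> j" "\<forall>j\<in>A. kparts (w j) (\<mu> j) k R"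
  shows "\<exists>f. alloc f A R \<and> (\<forall>i\<in>A. 2 * \<mu> i \<le> 3 * sum (w i) (f i))"
  using assms
proof (induction k arbitrary: A R rule: nat_induct_at_least)
  case base
  then obtain i where A: "A = {i}" by (metis One_nat_def card_1_singletonE)
  have "real 1 * \<mu> i \<le> sum (w i) R" using base A by (intro kparts_sum) auto
  then have "2 * \<mu> i \<le> 3 * sum (w i) R" using base A by auto
  then show ?case using A alloc_single by blast
next
  case (Suc n)
  note hyp = Suc.prems
  define xs where "xs = sorted_list_of_set R"
  have lxs: "length xs = card R" unfolding xs_def by simp
  have dxs: "distinct xs" unfolding xs_def by simp
  have sxs: "set xs = R" unfolding xs_def using hyp by simp
  have mono: "p \<le> q \<Longrightarrow> q < card R \<Longrightarrow> xs ! p \<le> xs ! q" for p q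
    unfolding xs_def using sls_mono hyp by blast
  have inR: "q < card R \<Longrightarrow> xs ! q \<in> R" for q unfolding xs_def using sls_in hyp by blast
  have step: "\<exists>f. alloc f A R \<and> (\<forall>i\<in>A. 2 * \<mu> i \<le> 3 * sum (w i) (f i))"
    if i: "i \<in> A" and B: "B \<subseteq> R" "B \<noteq> {}" and vi: "2 * \<mu> i \<le> 3 * sum (w i) B"
      and kpB: "\<forall>j\<in>A - {i}. kparts (w j) (\<mu> j) n (R - B)" for i B
  proof -
    obtain f where f: "alloc f (A - {i}) (R - B)" "\<forall>j\<in>A - {i}. 2 * \<mu> j \<le> 3 * sum (w j) (f j)"
      using Suc.IH[of "A - {i}" "R - B"] Suc.hyps hyp i kpB by auto
    have "alloc (f(i:=B)) (insert i (A - {i})) (B \<union> (R - B))"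
      using alloc_upd[OF f(1)] by blast
    moreover have "insert i (A - {i}) = A" "B \<union> (R - B) = R" using i B by auto
    ultimately have "alloc (f(i:=B)) A R" by simp
    moreover have "\<forall>j\<in>A. 2 * \<mu> j \<le> 3 * sum (w j) ((f(i:=B)) j)" using f(2) vi by auto
    ultimately show ?thesis by blast
  qed
  show ?case
  proof (cases "\<exists>i\<in>A. \<exists>g\<in>R. 2 * \<mu> i \<le> 3 * w i g")
    case True
    then obtain i g where ig: "i \<in> A" "g \<in> R" "2 * \<mu> i \<le> 3 * w i g" by blast
    show ?thesis
    proof (rule step[OF ig(1), of "{g}"])
      show "\<forall>j\<in>A - {i}. kparts (w j) (\<mu> j) n (R - {g})"
        using kparts_remove1[OF \<open>finite R\<close>, of "Suc n"] hyp ig by auto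
    qed (use ig in auto)
  next
    case noR1: False
    show ?thesis
    proof (cases "Suc (Suc n) \<le> card R \<and> (\<exists>i\<in>A. 2 * \<mu> i \<le> 3 * (w i (xs ! n) + w i (xs ! Suc n)))")
      case True
      then obtain i where i: "i \<in> A" "2 * \<mu> i \<le> 3 * (w i (xs ! n) + w i (xs ! Suc n))"
        and cR: "Suc (Suc n) \<le> card R" by blast
      define B where "B = {xs ! n, xs ! Suc n}"
      define C where "C = set (take (Suc (Suc n)) xs)"
      have n1: "n < length xs" "Suc n < length xs" using cR lxs by auto
      have neq: "xs ! n \<noteq> xs ! Suc n"
        using nth_eq_iff_index_eq[OF dxs n1] by simp
      have cB: "card B = 2" using neq unfolding B_def by simp
      have BR: "B \<subseteq> R" using inR[of n] inR[of "Suc n"] n1 lxs unfolding B_def by simp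
      have CR: "C \<subseteq> R" unfolding C_def using sxs by (meson set_take_subset)
      have "card C = length (take (Suc (Suc n)) xs)" unfolding C_def
        using dxs by (intro distinct_card) simp
      then have cC: "card C = Suc n + 1" using cR lxs by simp
      have tk: "xs ! p \<in> C" if p: "p < Suc (Suc n)" for p
      proof -
        have "p < length (take (Suc (Suc n)) xs)" using p cR lxs by simp
        then have "take (Suc (Suc n)) xs ! p \<in> set (take (Suc (Suc n)) xs)" by (rule nth_mem)
        then show "xs ! p \<in> C" using p unfolding C_def by simp
      qed
      have BC: "B \<subseteq> C" unfolding B_def using tk[of n] tk[of "Suc n"] by simp
      have sB: "sum (w i) B = w i (xs ! n) + w i (xs ! Suc n)" using neq unfolding B_def by simp
      show ?thesis
      proof (rule step[OF i(1) BR])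
        show "2 * \<mu> i \<le> 3 * sum (w i) B" using sB i by simp
        show "B \<noteq> {}" unfolding B_def by simp
        show "\<forall>j\<in>A - {i}. kparts (w j) (\<mu> j) n (R - B)"
        proof
          fix j assume j: "j \<in> A - {i}"
          have val: "\<forall>a\<in>C - B. \<forall>b\<in>B. w j b \<le> w j a"
          proof (intro ballI)
            fix a b assume a: "a \<in> C - B" and b: "b \<in> B"
            have aC: "a \<in> set (take (Suc (Suc n)) xs)" using a unfolding C_def by blast
            obtain p where p: "p < Suc (Suc n)" "p < length xs" "a = xs ! p"
              using in_take_nth[OF aC] by blast
            have "a \<noteq> xs ! n" "a \<noteq> xs ! Suc n" using a unfolding B_def by auto
            then have "p \<noteq> n" "p \<noteq> Suc n" using p(3) by auto
            then have pn: "p < n" using p(1) by linarith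
            have bb: "b = xs ! n \<or> b = xs ! Suc n" using b unfolding B_def by simp
            have m1: "xs ! p \<le> xs ! n" using mono[of p n] pn n1 lxs by simp
            have m2: "xs ! p \<le> xs ! Suc n" using mono[of p "Suc n"] pn n1 lxs by simp
            have ab: "a \<le> b" using bb m1 m2 p(3) by blast
            have aR: "a \<in> R" using a CR by blast
            have bR: "b \<in> R" using b BR by blast
            have jA: "j \<in> A" using j by simp
            show "w j b \<le> w j a" using hyp(5) jA aR bR ab by blast
          qed
          have jA: "j \<in> A" using j by simp
          have "kparts (w j) (\<mu> j) (Suc n - 1) (R - B)"
            by (rule kparts_remove2[OF \<open>finite R\<close> _ _ CR cC BC cB val]) (use hyp(7) jA in auto)
          then show "kparts (w j) (\<mu> j) n (R - B)" by simp
        qed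
      qed
    next
      case noR2: False
      define S where "S = set (take (Suc n) xs)"
      define T where "T = set (drop (Suc n) xs)"
      have STR: "S \<union> T = R" unfolding S_def T_def using sxs
        by (metis append_take_drop_id set_append)
      have disjST: "S \<inter> T = {}" unfolding S_def T_def using dxs
        by (simp add: set_take_disj_set_drop_if_distinct)
      have cS: "card S \<le> Suc n" unfolding S_def
        using card_length[of "take (Suc n) xs"] by simp
      have seeds: "\<forall>j\<in>A. \<forall>s\<in>S. 3 * w j s < 2 * \<mu> j"
      proof (intro ballI)
        fix j s assume "j \<in> A" "s \<in> S"
        then have "s \<in> R" "j \<in> A" using STR by auto
        then show "3 * w j s < 2 * \<mu> j" using noR1 by (meson not_le)
      qed
      have smalls: "\<forall>j\<in>A. \<forall>t\<in>T. 3 * w j t < \<mu> j"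
      proof (intro ballI)
        fix j t assume j: "j \<in> A" and t: "t \<in> T"
        have tT: "t \<in> set (drop (Suc n) xs)" using t unfolding T_def .
        obtain q where q: "Suc n \<le> q" "q < length xs" "t = xs ! q"
          using in_drop_nth[OF tT] by blast
        have qR: "q < card R" using q(2) lxs by simp
        have cR: "Suc (Suc n) \<le> card R" using q(1) qR by simp
        have "\<not> (\<exists>i\<in>A. 2 * \<mu> i \<le> 3 * (w i (xs ! n) + w i (xs ! Suc n)))"
          using noR2 cR by blast
        then have lt: "3 * (w j (xs ! n) + w j (xs ! Suc n)) < 2 * \<mu> j" using j by (meson not_le)
        have o1: "xs ! n \<le> xs ! Suc n" using mono[of n "Suc n"] qR q(1) by simp
        have o2: "xs ! Suc n \<le> xs ! q" using mono[of "Suc n" q] qR q(1) by simp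
        have r1: "xs ! n \<in> R" using inR[of n] qR q(1) by simp
        have r2: "xs ! Suc n \<in> R" using inR[of "Suc n"] qR q(1) by simp
        have r3: "xs ! q \<in> R" using inR[of q] qR by simp
        have mj: "\<forall>x\<in>R. \<forall>y\<in>R. x \<le> y \<longrightarrow> w j y \<le> w j x" using hyp(5) j by blast
        have "w j (xs ! Suc n) \<le> w j (xs ! n)" using mj r1 r2 o1 by blast
        moreover have "w j (xs ! q) \<le> w j (xs ! Suc n)" using mj r2 r3 o2 by blast
        ultimately show "3 * w j t < \<mu> j" using lt unfolding q(3) by argo
      qed
      have tot: "\<forall>j\<in>A. real (Suc n) * \<mu> j \<le> sum (w j) (S \<union> T)"
      proof
        fix j assume j: "j \<in> A"
        show "real (Suc n) * \<mu> j \<le> sum (w j) (S \<union> T)"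
        proof -
          have nn: "\<forall>x\<in>R. 0 \<le> w j x" using hyp(4) j by blast
          have "kparts (w j) (\<mu> j) (Suc n) R" using hyp(7) j by blast
          from kparts_sum[OF \<open>finite R\<close> nn this] show ?thesis unfolding STR .
        qed
      qed
      have "\<exists>f. alloc f A (S \<union> T) \<and> (\<forall>i\<in>A. 2 * \<mu> i \<le> 3 * sum (w i) (f i))"
        apply (rule phase2[where r = "Suc n", OF _ hyp(1,2) _ _ disjST cS _ _ tot seeds smalls])
        using hyp(3,4,6) STR by (auto simp: S_def T_def)
      then show ?thesis using STR by simp
    qed
  qed
qed



lemma sort_bij:
  fixes M :: "'a set" and g :: "'a \<Rightarrow> real"
  assumes "finite M"
  shows "\<exists>\<sigma>. bij_betw \<sigma> {0..<card M} M \<and> (\<forall>a b. a \<le> b \<longrightarrow> b < card M \<longrightarrow> g (\<sigma> b) \<le> g (\<sigma> a))"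
proof -
  obtain ys where ys: "set ys = M" "distinct ys" using finite_distinct_list[OF assms] by blast
  define xs where "xs = sort_key (\<lambda>x. - g x) ys"
  have s: "sorted (map (\<lambda>x. - g x) xs)" unfolding xs_def by simp
  have d: "distinct xs" "set xs = M" unfolding xs_def using ys by auto
  have l: "length xs = card M" using distinct_card[OF d(1)] d(2) by simp
  have "bij_betw ((!) xs) {0..<card M} M"
    using bij_betw_nth[OF d(1)] d l by (simp add: atLeast0LessThan)
  moreover have "g (xs ! b) \<le> g (xs ! a)" if "a \<le> b" "b < card M" for a b
  proof -
    have "map (\<lambda>x. - g x) xs ! a \<le> map (\<lambda>x. - g x) xs ! b"
      using sorted_nth_mono[OF s that(1)] that l by simp
    then show ?thesis using that l by simp
  qed
  ultimately show ?thesis by blast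
qed

definition pick :: "'a set \<Rightarrow> ('a \<Rightarrow> real) \<Rightarrow> 'a set \<Rightarrow> 'a" where
  "pick M g X = (SOME x. x \<in> M - X \<and> (\<forall>y\<in>M - X. g y \<le> g x))"

primrec picks :: "'a set \<Rightarrow> (nat \<Rightarrow> 'a \<Rightarrow> real) \<Rightarrow> (nat \<Rightarrow> nat) \<Rightarrow> nat \<Rightarrow> 'a list" where
  "picks M u ow 0 = []"
| "picks M u ow (Suc a) = picks M u ow a @ [pick M (u (ow a)) (set (picks M u ow a))]"

lemma pick_spec:
  assumes "finite M" "M - X \<noteq> {}"
  shows "pick M g X \<in> M - X \<and> (\<forall>y\<in>M - X. g y \<le> g (pick M g X))"
proof -
  have fin: "finite (g ` (M - X))" using assms by simp
  have "Max (g ` (M - X)) \<in> g ` (M - X)" using fin assms(2) by (intro Max_in) auto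
  then obtain x where x: "x \<in> M - X" "g x = Max (g ` (M - X))" by auto
  have "\<forall>y\<in>M - X. g y \<le> g x" using x fin by (auto intro: Max_ge)
  then have "\<exists>x. x \<in> M - X \<and> (\<forall>y\<in>M - X. g y \<le> g x)" using x by blast
  then show ?thesis unfolding pick_def by (rule someI_ex)
qed

lemma picks_props:
  assumes "finite M" "a \<le> card M"
  shows "length (picks M u ow a) = a \<and> distinct (picks M u ow a) \<and> set (picks M u ow a) \<subseteq> M"
  using assms(2)
proof (induction a)
  case 0 then show ?case by simp
next
  case (Suc a)
  then have IH: "length (picks M u ow a) = a" "distinct (picks M u ow a)" "set (picks M u ow a) \<subseteq> M"
    by auto
  have cX: "card (set (picks M u ow a)) = a" using distinct_card[OF IH(2)] IH(1) by simp
  have "M - set (picks M u ow a) \<noteq> {}"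
  proof
    assume "M - set (picks M u ow a) = {}"
    then have "M \<subseteq> set (picks M u ow a)" by blast
    then have "card M \<le> card (set (picks M u ow a))" by (intro card_mono) auto
    then show False using cX Suc.prems by simp
  qed
  from pick_spec[OF assms(1) this] show ?case using IH by auto
qed

lemma picks_nth:
  assumes "a < b"
  shows "picks M u ow b ! a = pick M (u (ow a)) (set (picks M u ow a))"
  using assms
proof (induction b)
  case 0 then show ?case by simp
next
  case (Suc b)
  have lb: "length (picks M u ow b) = b" by (induction b) auto
  show ?case
  proof (cases "a < b")
    case True then show ?thesis using Suc lb by (simp add: nth_append)
  next
    case False then have "a = b" using Suc by simp
    then show ?thesis using lb by (simp add: nth_append)
  qed
qed

lemma transfer:
  fixes M :: "'a set" and u :: "nat \<Rightarrow> 'a \<Rightarrow> real" and \<sigma> :: "nat \<Rightarrow> nat \<Rightarrow> 'a"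
    and T :: "nat \<Rightarrow> nat set" and I :: "nat set"
  assumes fin: "finite M" and m: "m = card M"
    and sig: "\<forall>i\<in>I. bij_betw (\<sigma> i) {0..<m} M \<and> (\<forall>a b. a \<le> b \<longrightarrow> b < m \<longrightarrow> u i (\<sigma> i b) \<le> u i (\<sigma> i a))"
    and T: "alloc T I {0..<m}"
  shows "\<exists>S. alloc S I M \<and> (\<forall>i\<in>I. sum (\<lambda>a. u i (\<sigma> i a)) (T i) \<le> sum (u i) (S i))"
proof -
  have Tdisj: "\<forall>i\<in>I. \<forall>j\<in>I. i \<noteq> j \<longrightarrow> T i \<inter> T j = {}" and Tun: "(\<Union>i\<in>I. T i) = {0..<m}"
    using T unfolding alloc_def by auto
  define ow where "ow a = (SOME i. i \<in> I \<and> a \<in> T i)" for a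
  have ow: "a < m \<Longrightarrow> ow a \<in> I \<and> a \<in> T (ow a)" for a
  proof -
    assume "a < m"
    then have "\<exists>i. i \<in> I \<and> a \<in> T i" using Tun by auto
    then show ?thesis unfolding ow_def by (rule someI_ex)
  qed
  have owu: "i \<in> I \<Longrightarrow> a \<in> T i \<Longrightarrow> ow a = i" for i a
  proof -
    assume i: "i \<in> I" "a \<in> T i"
    then have "a < m" using Tun by auto
    then show "ow a = i" using ow Tdisj i by blast
  qed
  define pk where "pk = picks M u ow m"
  define p where "p a = pk ! a" for a
  have pk: "length pk = m" "distinct pk" "set pk \<subseteq> M"
    using picks_props[OF fin, of m u ow] m unfolding pk_def by auto
  have setpk: "set pk = M"
  proof -
    have "card (set pk) = card M" using distinct_card[OF pk(2)] pk(1) m by simp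
    then show ?thesis using card_subset_eq[OF fin pk(3)] by simp
  qed
  have pinj: "inj_on p {0..<m}"
    unfolding p_def using pk by (simp add: inj_on_def nth_eq_iff_index_eq)
  have pim: "p ` {0..<m} = M"
    unfolding p_def using pk setpk by (auto simp: set_conv_nth image_def)
  have key: "u (ow a) (\<sigma> (ow a) a) \<le> u (ow a) (p a)" if a: "a < m" for a
  proof -
    define i where "i = ow a"
    have iI: "i \<in> I" using ow[OF a] unfolding i_def by simp
    have bij: "bij_betw (\<sigma> i) {0..<m} M" and mon: "\<forall>a b. a \<le> b \<longrightarrow> b < m \<longrightarrow> u i (\<sigma> i b) \<le> u i (\<sigma> i a)"
      using sig iI by auto
    define X where "X = set (picks M u ow a)"
    have Xp: "length (picks M u ow a) = a" "distinct (picks M u ow a)" "set (picks M u ow a) \<subseteq> M"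
      using picks_props[OF fin, of a u ow] a m by auto
    have cX: "card X = a" unfolding X_def using distinct_card[OF Xp(2)] Xp(1) by simp
    have pa: "p a = pick M (u i) X"
      unfolding p_def pk_def X_def i_def using picks_nth[OF a] .
    have injs: "inj_on (\<sigma> i) {0..a}" using bij a unfolding bij_betw_def
      by (meson atLeastAtMost_iff atLeastLessThan_iff inj_on_subset le_less_trans subsetI)
    have "card (\<sigma> i ` {0..a}) = Suc a" using card_image[OF injs] by simp
    then have "\<not> (\<sigma> i ` {0..a} \<subseteq> X)"
    proof -
      assume c: "card (\<sigma> i ` {0..a}) = Suc a"
      show ?thesis
      proof
        assume "\<sigma> i ` {0..a} \<subseteq> X"
        then have "card (\<sigma> i ` {0..a}) \<le> card X" unfolding X_def by (intro card_mono) auto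
        then show False using c cX by simp
      qed
    qed
    then obtain b where b: "b \<le> a" "\<sigma> i b \<notin> X" by (meson atLeastAtMost_iff image_subsetI)
    have bM: "\<sigma> i b \<in> M" using bij b a unfolding bij_betw_def by auto
    have "M - X \<noteq> {}" using bM b by auto
    from pick_spec[OF fin this, of "u i"] bM b
    have "u i (\<sigma> i b) \<le> u i (p a)" using pa by auto
    moreover have "u i (\<sigma> i a) \<le> u i (\<sigma> i b)" using mon b a by auto
    ultimately show ?thesis unfolding i_def by simp
  qed
  define S where "S i = p ` T i" for i
  have TI: "i \<in> I \<Longrightarrow> T i \<subseteq> {0..<m}" for i using Tun by blast
  have "alloc S I M" unfolding alloc_def
  proof (intro conjI ballI impI)
    fix i j assume ij: "i \<in> I" "j \<in> I" "i \<noteq> j"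
    have "S i \<inter> S j = p ` (T i \<inter> T j)"
      unfolding S_def using inj_on_image_Int[OF pinj TI[OF ij(1)] TI[OF ij(2)]] by simp
    then show "S i \<inter> S j = {}" using Tdisj ij by simp
  next
    have "(\<Union>i\<in>I. S i) = p ` (\<Union>i\<in>I. T i)" unfolding S_def by blast
    then show "(\<Union>i\<in>I. S i) = M" using Tun pim by simp
  qed
  moreover have "\<forall>i\<in>I. sum (\<lambda>a. u i (\<sigma> i a)) (T i) \<le> sum (u i) (S i)"
  proof
    fix i assume i: "i \<in> I"
    have "sum (u i) (S i) = sum (u i \<circ> p) (T i)"
      unfolding S_def using inj_on_subset[OF pinj TI[OF i]] by (simp add: sum.reindex)
    moreover have "sum (\<lambda>a. u i (\<sigma> i a)) (T i) \<le> sum (u i \<circ> p) (T i)"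
    proof (rule sum_mono)
      fix a assume a: "a \<in> T i"
      have "ow a = i" using owu[OF i a] .
      moreover have "a < m" using TI[OF i] a by auto
      ultimately show "u i (\<sigma> i a) \<le> (u i \<circ> p) a" using key by fastforce
    qed
    ultimately show "sum (\<lambda>a. u i (\<sigma> i a)) (T i) \<le> sum (u i) (S i)" by simp
  qed
  ultimately show ?thesis by blast
qed



lemma chores_alloc:
  fixes c :: "nat \<Rightarrow> 'b \<Rightarrow> real" and m :: "nat \<Rightarrow> real"
  assumes "k \<ge> 1" "finite A" "card A = k" "finite R"
    "\<forall>j\<in>A. \<forall>x\<in>R. 0 \<le> c j x \<and> c j x \<le> m j" "\<forall>j\<in>A. 0 \<le> m j"
    "\<forall>j\<in>A. sum (c j) R \<le> real k * m j"
  shows "\<exists>f. alloc f A R \<and> (\<forall>i\<in>A. sum (c i) (f i) \<le> 2 * m i)"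
  using assms
proof (induction k arbitrary: A R rule: nat_induct_at_least)
  case base
  then obtain i where A: "A = {i}" by (metis One_nat_def card_1_singletonE)
  have "sum (c i) R \<le> 2 * m i" using base A by auto
  then show ?case using A alloc_single by blast
next
  case (Suc n)
  note hyp = Suc.prems
  define Cs where "Cs = {B. B \<subseteq> R \<and> (\<forall>j\<in>A. m j < sum (c j) B)}"
  show ?case
  proof (cases "Cs = {}")
    case True
    then have "R \<notin> Cs" by simp
    then obtain i where i: "i \<in> A" "sum (c i) R \<le> m i" unfolding Cs_def by force
    define f where "f = (\<lambda>_. {})(i := R)"
    have "alloc f A R" unfolding alloc_def f_def using i by auto
    moreover have "\<forall>j\<in>A. sum (c j) (f j) \<le> 2 * m j" unfolding f_def using i hyp by auto
    ultimately show ?thesis by blast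
  next
    case False
    then obtain B1 where "B1 \<in> Cs" by blast
    then obtain B0 where B0: "B0 \<in> Cs" and B0min: "\<forall>B\<in>Cs. card B0 \<le> card B"
      using ex_has_least_nat[of "\<lambda>B. B \<in> Cs" B1 card] by blast
    have B0R: "B0 \<subseteq> R" and B0v: "\<forall>j\<in>A. m j < sum (c j) B0" using B0 unfolding Cs_def by auto
    have fB0: "finite B0" using B0R hyp finite_subset by blast
    have "B0 \<noteq> {}"
    proof
      assume "B0 = {}"
      moreover obtain j where "j \<in> A" using hyp by fastforce
      ultimately show False using B0v hyp by fastforce
    qed
    then obtain e where e: "e \<in> B0" by blast
    have "B0 - {e} \<notin> Cs"
    proof
      assume "B0 - {e} \<in> Cs"
      then have "card B0 \<le> card (B0 - {e})" using B0min by blast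
      then show False using e fB0 by (metis card_Diff1_less leD)
    qed
    then obtain i where i: "i \<in> A" "sum (c i) (B0 - {e}) \<le> m i"
      using B0R unfolding Cs_def by force
    have "sum (c i) B0 = sum (c i) (B0 - {e}) + c i e"
      using e fB0 by (metis add.commute sum.remove)
    moreover have "c i e \<le> m i" using hyp i e B0R by blast
    ultimately have vi: "sum (c i) B0 \<le> 2 * m i" using i by linarith
    have fR: "finite R" using hyp by simp
    obtain f where f: "alloc f (A - {i}) (R - B0)" "\<forall>j\<in>A - {i}. sum (c j) (f j) \<le> 2 * m j"
    proof -
      have "\<forall>j\<in>A - {i}. sum (c j) (R - B0) \<le> real n * m j"
      proof
        fix j assume j: "j \<in> A - {i}"
        have "sum (c j) (R - B0) = sum (c j) R - sum (c j) B0"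
          using B0R fR by (simp add: sum_diff)
        moreover have "real (Suc n) * m j = real n * m j + m j" by (simp add: algebra_simps)
        moreover have "sum (c j) R \<le> real (Suc n) * m j" "m j < sum (c j) B0" using hyp j B0v by auto
        ultimately show "sum (c j) (R - B0) \<le> real n * m j" by linarith
      qed
      moreover have "card (A - {i}) = n" using hyp i by simp
      ultimately show ?thesis
        using Suc.IH[of "A - {i}" "R - B0"] Suc.hyps hyp that by auto
    qed
    have "alloc (f(i:=B0)) (insert i (A - {i})) (B0 \<union> (R - B0))"
      using alloc_upd[OF f(1)] by blast
    moreover have "insert i (A - {i}) = A" "B0 \<union> (R - B0) = R" using i B0R by auto
    ultimately have "alloc (f(i:=B0)) A R" by simp
    moreover have "\<forall>j\<in>A. sum (c j) ((f(i:=B0)) j) \<le> 2 * m j" using f(2) vi by auto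
    ultimately show ?thesis by blast
  qed
qed



lemma alloc_to_part:
  assumes "alloc S {1..N} M"
  shows "(\<lambda>j. if j \<in> {1..N} then S j else {}) \<in> partitions N M"
  using assms unfolding alloc_def partitions_def by auto

lemma MmS_sum_ge:
  assumes "finite M" "N \<ge> 1"
  shows "real N * MmS v N M \<le> sum v M"
proof -
  obtain S where S: "S \<in> partitions N M" "\<And>j. j \<in> {1..N} \<Longrightarrow> MmS v N M \<le> sum v (S j)"
    using MmS_part[OF assms] by blast
  have "real N * MmS v N M = (\<Sum>j\<in>{1..N}. MmS v N M)" by simp
  also have "\<dots> \<le> (\<Sum>j\<in>{1..N}. sum v (S j))" using S(2) by (intro sum_mono) auto
  also have "\<dots> = sum v M" using part_sum[OF assms(1) S(1), of v] by simp
  finally show ?thesis .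
qed

lemma goods_23:
  fixes M :: "'a set" and u :: "nat \<Rightarrow> 'a \<Rightarrow> real"
  assumes fin: "finite M" and N: "N \<ge> 1" and nn: "nonneg_instance M N u"
  shows "max_min_solvable (2/3) M N u"
proof -
  define m where "m = card M"
  define \<sigma> where "\<sigma> i = (SOME \<sigma>. bij_betw \<sigma> {0..<m} M \<and> (\<forall>a b. a \<le> b \<longrightarrow> b < m \<longrightarrow> u i (\<sigma> b) \<le> u i (\<sigma> a)))" for i
  have sig: "bij_betw (\<sigma> i) {0..<m} M \<and> (\<forall>a b. a \<le> b \<longrightarrow> b < m \<longrightarrow> u i (\<sigma> i b) \<le> u i (\<sigma> i a))" for i
    unfolding \<sigma>_def m_def using sort_bij[OF fin, of "u i"] by (rule someI_ex)
  define w where "w i a = u i (\<sigma> i a)" for i a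
  define \<mu> where "\<mu> i = MmS (u i) N M" for i
  have uu: "i \<in> {1..N} \<Longrightarrow> \<forall>x\<in>M. 0 \<le> u i x" for i using nn unfolding nonneg_instance_def by auto
  have mu0: "i \<in> {1..N} \<Longrightarrow> 0 \<le> \<mu> i" for i unfolding \<mu>_def using MmS_nonneg[OF fin N] uu by blast
  have sigM: "a < m \<Longrightarrow> \<sigma> i a \<in> M" for i a using sig[of i] unfolding bij_betw_def by auto
  have kp: "kparts (w i) (\<mu> i) N {0..<m}" if i: "i \<in> {1..N}" for i
  proof -
    obtain S where S: "S \<in> partitions N M" "\<And>j. j \<in> {1..N} \<Longrightarrow> \<mu> i \<le> sum (u i) (S j)"
      using MmS_part[OF fin N, of "u i"] unfolding \<mu>_def by blast
    define P where "P l = {a \<in> {0..<m}. \<sigma> i a \<in> S (Suc l)}" for l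
    have bij: "bij_betw (\<sigma> i) {0..<m} M" using sig by blast
    have img: "\<sigma> i ` P l = S (Suc l)" for l
    proof
      show "\<sigma> i ` P l \<subseteq> S (Suc l)" unfolding P_def by auto
      show "S (Suc l) \<subseteq> \<sigma> i ` P l"
      proof
        fix x assume x: "x \<in> S (Suc l)"
        then have "x \<in> M" using part_sub[OF S(1)] by blast
        then obtain a where "a \<in> {0..<m}" "\<sigma> i a = x" using bij unfolding bij_betw_def by auto
        then show "x \<in> \<sigma> i ` P l" using x unfolding P_def by auto
      qed
    qed
    have sumP: "sum (w i) (P l) = sum (u i) (S (Suc l))" for l
    proof -
      have "inj_on (\<sigma> i) (P l)" using bij unfolding bij_betw_def P_def by (auto intro: inj_on_subset)
      then have "sum (u i) (\<sigma> i ` P l) = sum (u i \<circ> \<sigma> i) (P l)" by (rule sum.reindex)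
      then show ?thesis using img unfolding w_def by (simp add: o_def)
    qed
    show ?thesis unfolding kparts_def
    proof (rule exI[of _ P], intro conjI allI impI)
      fix l assume l: "l < N"
      show "P l \<subseteq> {0..<m}" unfolding P_def by auto
      show "\<mu> i \<le> sum (w i) (P l)" using sumP S(2)[of "Suc l"] l by simp
    next
      fix l l' assume "l < N" "l' < N" "l \<noteq> l'"
      then have "S (Suc l) \<inter> S (Suc l') = {}" using part_disj[OF S(1)] by simp
      then show "P l \<inter> P l' = {}" unfolding P_def by auto
    qed
  qed
  obtain T where T: "alloc T {1..N} {0..<m}" "\<forall>i\<in>{1..N}. 2 * \<mu> i \<le> 3 * sum (w i) (T i)"
  proof -
    have "\<exists>f. alloc f {1..N} {0..<m} \<and> (\<forall>i\<in>{1..N}. 2 * \<mu> i \<le> 3 * sum (w i) (f i))"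
    proof (rule phase1[OF N])
      show "\<forall>j\<in>{1..N}. \<forall>x\<in>{0..<m}. 0 \<le> w j x" using uu sigM unfolding w_def by auto
      show "\<forall>j\<in>{1..N}. \<forall>x\<in>{0..<m}. \<forall>y\<in>{0..<m}. x \<le> y \<longrightarrow> w j y \<le> w j x"
        using sig unfolding w_def by auto
      show "\<forall>j\<in>{1..N}. 0 \<le> \<mu> j" using mu0 by auto
      show "\<forall>j\<in>{1..N}. kparts (w j) (\<mu> j) N {0..<m}" using kp by auto
    qed auto
    then show ?thesis using that by blast
  qed
  obtain S where S: "alloc S {1..N} M" "\<forall>i\<in>{1..N}. sum (\<lambda>a. u i (\<sigma> i a)) (T i) \<le> sum (u i) (S i)"
    using transfer[OF fin m_def _ T(1), of \<sigma> u] sig by blast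
  define S' where "S' j = (if j \<in> {1..N} then S j else {})" for j
  have "S' \<in> partitions N M" unfolding S'_def using alloc_to_part[OF S(1)] by simp
  moreover have "\<forall>i\<in>{1..N}. 2/3 * MmS (u i) N M \<le> sum (u i) (S' i)"
    using T(2) S(2) unfolding S'_def w_def \<mu>_def by fastforce
  ultimately show ?thesis unfolding max_min_solvable_def solves_max_min_def by blast
qed

lemma chores_2:
  fixes M :: "'a set" and d :: "nat \<Rightarrow> 'a \<Rightarrow> real"
  assumes fin: "finite M" and N: "N \<ge> 1" and np: "nonpos_instance M N d"
  shows "max_min_solvable 2 M N d"
proof -
  define c where "c i x = - d i x" for i x
  define mm where "mm i = - MmS (d i) N M" for i
  have dd: "i \<in> {1..N} \<Longrightarrow> \<forall>x\<in>M. d i x \<le> 0" for i using np unfolding nonpos_instance_def by auto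
  have cx: "c i x \<le> mm i" if i: "i \<in> {1..N}" and x: "x \<in> M" for i x
  proof -
    obtain S where S: "S \<in> partitions N M" "\<And>j. j \<in> {1..N} \<Longrightarrow> MmS (d i) N M \<le> sum (d i) (S j)"
      using MmS_part[OF fin N] by blast
    obtain j where j: "j \<in> {1..N}" "x \<in> S j" using part_union[OF S(1)] x by blast
    have fS: "finite (S j)" using part_sub[OF S(1)] fin finite_subset by blast
    have "sum (d i) (S j) = d i x + sum (d i) (S j - {x})" using j fS by (simp add: sum.remove)
    moreover have "sum (d i) (S j - {x}) \<le> 0" using dd[OF i] part_sub[OF S(1)] by (intro sum_nonpos) blast
    ultimately have "sum (d i) (S j) \<le> d i x" by simp
    then show ?thesis using S(2)[OF j(1)] unfolding c_def mm_def by simp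
  qed
  have "\<exists>f. alloc f {1..N} M \<and> (\<forall>i\<in>{1..N}. sum (c i) (f i) \<le> 2 * mm i)"
  proof (rule chores_alloc[OF N, where A="{1..N}" and R=M])
    show "\<forall>j\<in>{1..N}. \<forall>x\<in>M. 0 \<le> c j x \<and> c j x \<le> mm j" using dd cx unfolding c_def by fastforce
    show "\<forall>j\<in>{1..N}. 0 \<le> mm j" using MmS_nonpos[OF fin N] dd unfolding mm_def by fastforce
    show "\<forall>j\<in>{1..N}. sum (c j) M \<le> real N * mm j"
    proof
      fix j assume "j \<in> {1..N}"
      have "real N * MmS (d j) N M \<le> sum (d j) M" by (rule MmS_sum_ge[OF fin N])
      moreover have "sum (c j) M = - sum (d j) M" unfolding c_def by (simp add: sum_negf)
      ultimately show "sum (c j) M \<le> real N * mm j" unfolding mm_def by simp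
    qed
  qed (use fin in auto)
  then obtain f where f: "alloc f {1..N} M" "\<forall>i\<in>{1..N}. sum (c i) (f i) \<le> 2 * mm i" by blast
  define S' where "S' j = (if j \<in> {1..N} then f j else {})" for j
  have "S' \<in> partitions N M" unfolding S'_def using alloc_to_part[OF f(1)] by simp
  moreover have "\<forall>i\<in>{1..N}. 2 * MmS (d i) N M \<le> sum (d i) (S' i)"
  proof
    fix i assume i: "i \<in> {1..N}"
    have "sum (c i) (f i) = - sum (d i) (f i)" unfolding c_def by (simp add: sum_negf)
    then show "2 * MmS (d i) N M \<le> sum (d i) (S' i)" using f(2) i unfolding S'_def mm_def by fastforce
  qed
  ultimately show ?thesis unfolding max_min_solvable_def solves_max_min_def by blast
qed



lemma goods_part:
  fixes M :: "'a set" and u :: "nat \<Rightarrow> 'a \<Rightarrow> real"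
  assumes fin: "finite M" and N: "N \<ge> 1" and nn: "nonneg_instance M N u"
  shows "ereal (2/3) \<le> opt_ratio_nonneg M N u \<and> opt_ratio_nonneg M N u \<le> \<infinity> \<and>
            (opt_ratio_nonneg M N u = \<infinity> \<longleftrightarrow> (\<forall>i\<in>{1..N}. MmS (u i) N M = 0))"
proof -
  define sol where "sol r = max_min_solvable r M N u" for r
  define P where "P l = (0 \<le> l \<and> (l = \<infinity> \<longrightarrow> (\<forall>r. sol r)) \<and> (l \<noteq> \<infinity> \<longrightarrow> sol (real_of_ereal l)))" for l :: ereal
  have opt: "opt_ratio_nonneg M N u = (GREATEST l. P l)"
    unfolding opt_ratio_nonneg_def P_def sol_def by simp
  define \<mu> where "\<mu> i = MmS (u i) N M" for i
  have uu: "i \<in> {1..N} \<Longrightarrow> \<forall>x\<in>M. 0 \<le> u i x" for i using nn unfolding nonneg_instance_def by auto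
  have mu0: "i \<in> {1..N} \<Longrightarrow> 0 \<le> \<mu> i" for i unfolding \<mu>_def using MmS_nonneg[OF fin N] uu by blast
  have psum: "S \<in> partitions N M \<Longrightarrow> i \<in> {1..N} \<Longrightarrow> 0 \<le> sum (u i) (S i)" for S i
    using uu part_sub by (meson subsetD sum_nonneg)
  have sol23: "sol (2/3)" unfolding sol_def by (rule goods_23[OF fin N nn])
  show ?thesis
  proof (cases "\<forall>i\<in>{1..N}. \<mu> i = 0")
    case True
    have "sol r" for r
    proof -
      let ?S = "\<lambda>j. if j = 1 then M else {}"
      have Sp: "?S \<in> partitions N M" by (rule partitions_ne[OF N])
      have "\<forall>i\<in>{1..N}. r * MmS (u i) N M \<le> sum (u i) (?S i)"
        using True psum[OF Sp] unfolding \<mu>_def by auto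
      then show ?thesis unfolding sol_def max_min_solvable_def solves_max_min_def
        using Sp by blast
    qed
    then have allsol: "\<forall>r. sol r" by blast
    have "P \<infinity>" unfolding P_def using allsol by simp
    then have "(GREATEST l. P l) = \<infinity>" by (intro Greatest_equality) auto
    then show ?thesis using True opt unfolding \<mu>_def by simp
  next
    case False
    then obtain i0 where i0: "i0 \<in> {1..N}" "\<mu> i0 \<noteq> 0" by blast
    then have i0p: "0 < \<mu> i0" using mu0 by force
    define Ip where "Ip = {i \<in> {1..N}. 0 < \<mu> i}"
    have Ip: "finite Ip" "Ip \<noteq> {}" unfolding Ip_def using i0 i0p by auto
    define c where "c S = Min ((\<lambda>i. sum (u i) (S i) / \<mu> i) ` Ip)" for S :: "nat \<Rightarrow> 'a set"
    define L where "L = Max (c ` partitions N M)"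
    have fP: "finite (partitions N M)" "partitions N M \<noteq> {}"
      using partitions_finite[OF fin] partitions_ne[OF N] by auto
    have solS: "(\<forall>i\<in>{1..N}. r * \<mu> i \<le> sum (u i) (S i)) \<longleftrightarrow> r \<le> c S"
      if S: "S \<in> partitions N M" for S r
    proof
      assume h: "\<forall>i\<in>{1..N}. r * \<mu> i \<le> sum (u i) (S i)"
      show "r \<le> c S" unfolding c_def
      proof (rule Min.boundedI)
        show "finite ((\<lambda>i. sum (u i) (S i) / \<mu> i) ` Ip)" "(\<lambda>i. sum (u i) (S i) / \<mu> i) ` Ip \<noteq> {}"
          using Ip by auto
      next
        fix a assume "a \<in> (\<lambda>i. sum (u i) (S i) / \<mu> i) ` Ip"
        then obtain i where i: "i \<in> Ip" "a = sum (u i) (S i) / \<mu> i" by blast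
        then have "0 < \<mu> i" "i \<in> {1..N}" unfolding Ip_def by auto
        then show "r \<le> a" using h i by (simp add: pos_le_divide_eq)
      qed
    next
      assume h: "r \<le> c S"
      show "\<forall>i\<in>{1..N}. r * \<mu> i \<le> sum (u i) (S i)"
      proof
        fix i assume i: "i \<in> {1..N}"
        show "r * \<mu> i \<le> sum (u i) (S i)"
        proof (cases "0 < \<mu> i")
          case True
          then have "i \<in> Ip" unfolding Ip_def using i by simp
          then have "c S \<le> sum (u i) (S i) / \<mu> i" unfolding c_def using Ip by (intro Min_le) auto
          then show ?thesis using h True by (smt (verit) mult_right_mono pos_le_divide_eq)
        next
          case False
          then have "\<mu> i = 0" using mu0[OF i] by simp
          then show ?thesis using psum[OF S i] by simp
        qed
      qed
    qed
    have solL: "sol r \<longleftrightarrow> r \<le> L" for r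
    proof
      assume "sol r"
      then obtain S where S: "S \<in> partitions N M" "\<forall>i\<in>{1..N}. r * \<mu> i \<le> sum (u i) (S i)"
        unfolding sol_def max_min_solvable_def solves_max_min_def \<mu>_def by (auto simp: mult.commute)
      then have "r \<le> c S" using solS by blast
      also have "c S \<le> L" unfolding L_def using fP S by (intro Max_ge) auto
      finally show "r \<le> L" .
    next
      assume r: "r \<le> L"
      have "L \<in> c ` partitions N M" unfolding L_def using fP by (intro Max_in) auto
      then obtain S where S: "S \<in> partitions N M" "L = c S" by blast
      then have "\<forall>i\<in>{1..N}. r * \<mu> i \<le> sum (u i) (S i)" using solS r by blast
      then show "sol r" unfolding sol_def max_min_solvable_def solves_max_min_def \<mu>_def
        using S by (auto simp: mult.commute)
    qed
    have L23: "2/3 \<le> L" using sol23 solL by blast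
    have "P (ereal L)" unfolding P_def using L23 solL by auto
    moreover have "y \<le> ereal L" if "P y" for y
    proof (cases y)
      case (real r)
      then show ?thesis using that solL unfolding P_def by auto
    next
      case PInf
      then have "sol (L + 1)" using that unfolding P_def by auto
      then show ?thesis using solL by auto
    next
      case MInf then show ?thesis by simp
    qed
    ultimately have "(GREATEST l. P l) = ereal L" by (intro Greatest_equality) auto
    then show ?thesis using opt L23 i0 unfolding \<mu>_def by auto
  qed
qed

lemma chores_part:
  fixes M :: "'a set" and d :: "nat \<Rightarrow> 'a \<Rightarrow> real"
  assumes fin: "finite M" and N: "N \<ge> 1" and np: "nonpos_instance M N d"
  shows "0 \<le> opt_ratio_nonpos M N d \<and> opt_ratio_nonpos M N d \<le> 2 \<and>
            ((\<exists>i\<in>{1..N}. MmS (d i) N M = 0) \<longrightarrow> opt_ratio_nonpos M N d = 0)"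
proof -
  define sol where "sol r = max_min_solvable r M N d" for r
  define P where "P l = (0 \<le> l \<and> sol l)" for l :: real
  have opt: "opt_ratio_nonpos M N d = (LEAST l. P l)"
    unfolding opt_ratio_nonpos_def P_def sol_def by simp
  define \<mu> where "\<mu> i = MmS (d i) N M" for i
  have dd: "i \<in> {1..N} \<Longrightarrow> \<forall>x\<in>M. d i x \<le> 0" for i using np unfolding nonpos_instance_def by auto
  have mu0: "i \<in> {1..N} \<Longrightarrow> \<mu> i \<le> 0" for i unfolding \<mu>_def using MmS_nonpos[OF fin N] dd by blast
  define valid where "valid S = (S \<in> partitions N M \<and> (\<forall>i\<in>{1..N}. \<mu> i = 0 \<longrightarrow> 0 \<le> sum (d i) (S i)))"
    for S :: "nat \<Rightarrow> 'a set"
  define a where "a S = Max (insert 0 ((\<lambda>i. sum (d i) (S i) / \<mu> i) ` {i\<in>{1..N}. \<mu> i < 0}))"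
    for S :: "nat \<Rightarrow> 'a set"
  have a0: "0 \<le> a S" for S unfolding a_def by (intro Max_ge) auto
  have Pchar: "P l \<longleftrightarrow> (\<exists>S. valid S \<and> a S \<le> l)" for l
  proof
    assume "P l"
    then obtain S where l0: "0 \<le> l" and S: "S \<in> partitions N M" "\<forall>i\<in>{1..N}. l * \<mu> i \<le> sum (d i) (S i)"
      unfolding P_def sol_def max_min_solvable_def solves_max_min_def \<mu>_def by (auto simp: mult.commute)
    have "valid S" unfolding valid_def using S by auto
    moreover have "a S \<le> l" unfolding a_def
    proof (rule Max.boundedI)
      fix x assume "x \<in> insert 0 ((\<lambda>i. sum (d i) (S i) / \<mu> i) ` {i\<in>{1..N}. \<mu> i < 0})"
      then show "x \<le> l"
      proof
        assume "x = 0" then show ?thesis using l0 by simp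
      next
        assume "x \<in> (\<lambda>i. sum (d i) (S i) / \<mu> i) ` {i\<in>{1..N}. \<mu> i < 0}"
        then obtain i where i: "i \<in> {1..N}" "\<mu> i < 0" "x = sum (d i) (S i) / \<mu> i" by blast
        then show ?thesis using S(2) by (simp add: neg_divide_le_eq)
      qed
    qed auto
    ultimately show "\<exists>S. valid S \<and> a S \<le> l" by blast
  next
    assume "\<exists>S. valid S \<and> a S \<le> l"
    then obtain S where S: "valid S" "a S \<le> l" by blast
    have l0: "0 \<le> l" using a0[of S] S by linarith
    have "\<forall>i\<in>{1..N}. l * \<mu> i \<le> sum (d i) (S i)"
    proof
      fix i assume i: "i \<in> {1..N}"
      show "l * \<mu> i \<le> sum (d i) (S i)"
      proof (cases "\<mu> i < 0")
        case True
        have "sum (d i) (S i) / \<mu> i \<le> a S" unfolding a_def using i True by (intro Max_ge) auto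
        then have "sum (d i) (S i) / \<mu> i \<le> l" using S by linarith
        then show ?thesis using True by (simp add: neg_divide_le_eq)
      next
        case False
        then have "\<mu> i = 0" using mu0[OF i] by simp
        then show ?thesis using S(1) i unfolding valid_def by simp
      qed
    qed
    then show "P l" unfolding P_def sol_def max_min_solvable_def solves_max_min_def \<mu>_def
      using S(1) l0 unfolding valid_def by (auto simp: mult.commute)
  qed
  have P2: "P 2" unfolding P_def sol_def using chores_2[OF fin N np] by simp
  then obtain S2 where S2: "valid S2" using Pchar by blast
  have fV: "finite {S. valid S}"
    using partitions_finite[OF fin] by (rule finite_subset[rotated]) (auto simp: valid_def)
  define L where "L = Min (a ` {S. valid S})"
  have "L \<in> a ` {S. valid S}" unfolding L_def using fV S2 by (intro Min_in) auto
  then have PL: "P L" using Pchar by auto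
  have Lmin: "P y \<Longrightarrow> L \<le> y" for y
  proof -
    assume "P y"
    then obtain S where "valid S" "a S \<le> y" using Pchar by blast
    moreover have "L \<le> a S" unfolding L_def using fV \<open>valid S\<close> by (intro Min_le) auto
    ultimately show "L \<le> y" by linarith
  qed
  have LL: "(LEAST l. P l) = L" by (intro Least_equality PL Lmin)
  have P0: "P 0" if ex: "\<exists>i\<in>{1..N}. MmS (d i) N M = 0"
  proof -
    obtain i0 where i0: "i0 \<in> {1..N}" "MmS (d i0) N M = 0" using ex by blast
    define S where "S j = (if j = i0 then M else {})" for j
    have Sp: "S \<in> partitions N M" unfolding S_def partitions_def using i0 by auto
    have "real N * MmS (d i0) N M \<le> sum (d i0) M" by (rule MmS_sum_ge[OF fin N])
    then have "0 \<le> sum (d i0) M" using i0 by simp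
    then have "\<forall>i\<in>{1..N}. 0 * MmS (d i) N M \<le> sum (d i) (S i)" unfolding S_def by auto
    then show ?thesis unfolding P_def sol_def max_min_solvable_def solves_max_min_def using Sp by auto
  qed
  show ?thesis using opt LL PL Lmin P2 P0 unfolding P_def by force
qed


theorem lemma4:
  fixes M :: "'a set" and N :: nat
    and u :: "nat \<Rightarrow> 'a \<Rightarrow> real" and d :: "nat \<Rightarrow> 'a \<Rightarrow> real"
  assumes "finite M" and "N \<ge> 1"
  shows "(nonneg_instance M N u \<longrightarrow>
            ereal (2/3) \<le> opt_ratio_nonneg M N u \<and> opt_ratio_nonneg M N u \<le> \<infinity> \<and>
            (opt_ratio_nonneg M N u = \<infinity> \<longleftrightarrow> (\<forall>i\<in>{1..N}. MmS (u i) N M = 0)))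
       \<and> (nonpos_instance M N d \<longrightarrow>
            0 \<le> opt_ratio_nonpos M N d \<and> opt_ratio_nonpos M N d \<le> 2 \<and>
            ((\<exists>i\<in>{1..N}. MmS (d i) N M = 0) \<longrightarrow> opt_ratio_nonpos M N d = 0))"
  using goods_part[OF assms] chores_part[OF assms] by blast

end
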